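(* Let $\Gamma=(V,E,w)$ be a directed network with walk matrix $W$. Let $A=\{a_1,\dots,a_k\}\subset V$ and $B=\{b_1,\dots,b_k\}\subset V$ be totally ordered subsets of the same cardinality $k$ (not necessarily disjoint), and $W_{A,B}=(W(a_i,b_j))_{i,j=1}^k$. Then, as formal power series in the edge weights, $$\det(W_{A,B})=\sum_{\sigma\in S_k}\operatorname{sgn}(\sigma)\sum_{(\pi_1,\dots,\pi_k)} w(\pi_1)\cdots w(\pi_k),$$ where the inner sum runs over all families of walks $\pi_1,\dots,\pi_k$ with $\pi_i$ a walk from $a_i$ to $b_{\sigma(i)}$ such that for all $1\le i<j\le k$ the walk $\pi_j$ has no vertex in common with the loop-erased part $\mathrm{LE}(\pi_i)$.
   Context: A directed network $\Gamma=(V,E,w)$ is a directed graph with vertex set $V$ and edge set $E$ (loops and multiple edges allowed) together with a family of commuting formal variables $\{w(e)\}_{e\in E}$. A walk $\pi$ of length $m$ from $a$ to $b$ is a sequence $a=a_0\xrightarrow{e_1}a_1\xrightarrow{e_2}\cdots\xrightarrow{e_m}a_m=b$ with each $e_i$ an edge from $a_{i-1}$ to $a_i$; its weight is $w(\pi)=\prod_i w(e_i)$, the length-$0$ walk having weight $1$. It is assumed that between any two vertices there are at most countably many walks of each fixed length, so that $W(a,b)=\sum_{\pi:a\to b}w(\pi)$ (sum over all walks from $a$ to $b$, including length 0 if $a=b$) is a well-defined formal power series; $W=(W(a,b))_{a,b\in V}$ is the walk matrix. A walk "has a vertex in common" with another if some vertex $a_i$ of one equals some vertex of the other. Loop erasure: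 if all vertices $a_0,\dots,a_m$ of $\pi$ are distinct, $\mathrm{LE}(\pi)=\pi$; otherwise take $a_i=a_j$ ($i<j$) with $j$ as small as possible, delete the segment $a_i\xrightarrow{e_{i+1}}\cdots\xrightarrow{e_j}a_j$ from $\pi$ to obtain $\pi'$, and set $\mathrm{LE}(\pi)=\mathrm{LE}(\pi')$. $\mathrm{LE}(\pi)$ is a self-avoiding walk from $a_0$ to $a_m$. *)

theory Defs
  imports Main "HOL-Library.Multiset" "HOL-Combinatorics.Permutations"
begin

text \<open>A directed network is given by a vertex type 'v, an edge type 'e and
  source/target maps src, tgt :: 'e => 'v (loops and multiple edges allowed).
  The weight w(e) of edge e is a formal commuting variable; a monomial in these
  variables is a multiset of edges. A walk starting at a is its list of edges.\<close>

fun is_walk :: "('e \<Rightarrow> 'v) \<Rightarrow> ('e \<Rightarrow> 'v) \<Rightarrow> 'v \<Rightarrow> 'e list \<Rightarrow> 'v \<Rightarrow> bool" where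
  "is_walk src tgt a [] b = (a = b)"
| "is_walk src tgt a (e # es) b = (src e = a \<and> is_walk src tgt (tgt e) es b)"

definition walk_verts :: "('e \<Rightarrow> 'v) \<Rightarrow> 'v \<Rightarrow> 'e list \<Rightarrow> 'v list" where
  "walk_verts tgt a es = a # map tgt es"

text \<open>Loop erasure, exactly as in the paper: if the vertices are not distinct,
  take the smallest j such that a_i = a_j for some i < j, delete the segment
  from a_i to a_j (edges e_(i+1), ..., e_j) and recurse.  (For this minimal j
  the index i is unique, since a_0..a_(j-1) are distinct; we pick it by LEAST.)\<close>

definition le_j :: "'v list \<Rightarrow> nat" where
  "le_j vs = (LEAST j. j < length vs \<and> (\<exists>i<j. vs ! i = vs ! j))"

definition le_i :: "'v list \<Rightarrow> nat" where
  "le_i vs = (LEAST i. i < le_j vs \<and> vs ! i = vs ! le_j vs)"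

lemma le_j_props:
  assumes "\<not> distinct vs"
  shows "le_j vs < length vs \<and> (\<exists>i<le_j vs. vs ! i = vs ! le_j vs)"
proof -
  from assms obtain i j where ij: "i < length vs" "j < length vs" "i \<noteq> j" "vs ! i = vs ! j"
    by (auto simp: distinct_conv_nth)
  define i' where "i' = min i j"
  define j' where "j' = max i j"
  have "i' < j'" "j' < length vs" "vs ! i' = vs ! j'"
    using ij by (auto simp: i'_def j'_def min_def max_def)
  then have "\<exists>j. j < length vs \<and> (\<exists>i<j. vs ! i = vs ! j)" by blast
  then show ?thesis unfolding le_j_def by (rule LeastI_ex)
qed

lemma le_i_props:
  assumes "\<not> distinct vs"
  shows "le_i vs < le_j vs \<and> vs ! le_i vs = vs ! le_j vs"
proof -
  from le_j_props[OF assms]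
  have "\<exists>i. i < le_j vs \<and> vs ! i = vs ! le_j vs" by blast
  then show ?thesis unfolding le_i_def by (rule LeastI_ex)
qed

function loop_erase :: "('e \<Rightarrow> 'v) \<Rightarrow> 'v \<Rightarrow> 'e list \<Rightarrow> 'e list" where
  "loop_erase tgt a es =
     (if distinct (walk_verts tgt a es) then es
      else loop_erase tgt a
             (take (le_i (walk_verts tgt a es)) es @ drop (le_j (walk_verts tgt a es)) es))"
  by pat_completeness auto
termination
proof (relation "measure (\<lambda>(tgt, a, es). length es)")
  fix tgt :: "'e \<Rightarrow> 'v" and a es
  assume nd: "\<not> distinct (walk_verts tgt a es)"
  let ?vs = "walk_verts tgt a es"
  have "le_j ?vs < length ?vs" "le_i ?vs < le_j ?vs"
    using le_j_props[OF nd] le_i_props[OF nd] by auto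
  then have "le_j ?vs \<le> length es" "le_i ?vs < le_j ?vs"
    by (auto simp: walk_verts_def)
  then show "((tgt, a, take (le_i ?vs) es @ drop (le_j ?vs) es), (tgt, a, es))
               \<in> measure (\<lambda>(tgt, a, es). length es)"
    by auto
qed auto

declare loop_erase.simps[simp del]

text \<open>A formal power series with integer coefficients in the variables w(e) is
  its coefficient function on monomials (multisets of edges).\<close>
type_synonym 'e mps = "'e multiset \<Rightarrow> int"

definition mps_one :: "'e mps" where
  "mps_one = (\<lambda>m. if m = {#} then 1 else 0)"

definition mps_mult :: "'e mps \<Rightarrow> 'e mps \<Rightarrow> 'e mps" where
  "mps_mult f g = (\<lambda>m. \<Sum>m1\<in>{m1. m1 \<subseteq># m}. f m1 * g (m - m1))"

definition mps_prod_list :: "'e mps list \<Rightarrow> 'e mps" where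
  "mps_prod_list fs = foldr mps_mult fs mps_one"

definition mps_det :: "nat \<Rightarrow> (nat \<Rightarrow> nat \<Rightarrow> 'e mps) \<Rightarrow> 'e mps" where
  "mps_det k M = (\<lambda>m. \<Sum>\<sigma>\<in>{\<sigma>. \<sigma> permutes {..<k}}.
      of_int (sign \<sigma>) * mps_prod_list (map (\<lambda>i. M i (\<sigma> i)) [0..<k]) m)"

text \<open>Walk matrix entry W(a,b) = sum over walks a -> b of w(pi): the coefficient
  of monomial m is the number of walks from a to b with edge multiset m.\<close>
definition walk_series :: "('e \<Rightarrow> 'v) \<Rightarrow> ('e \<Rightarrow> 'v) \<Rightarrow> 'v \<Rightarrow> 'v \<Rightarrow> 'e mps" where
  "walk_series src tgt a b = (\<lambda>m. int (card {es. is_walk src tgt a es b \<and> mset es = m}))"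

definition LE_families ::
  "('e \<Rightarrow> 'v) \<Rightarrow> ('e \<Rightarrow> 'v) \<Rightarrow> nat \<Rightarrow> (nat \<Rightarrow> 'v) \<Rightarrow> (nat \<Rightarrow> 'v) \<Rightarrow> (nat \<Rightarrow> nat) \<Rightarrow> 'e list list set" where
  "LE_families src tgt k a b \<sigma> =
     {ps. length ps = k \<and> (\<forall>i<k. is_walk src tgt (a i) (ps ! i) (b (\<sigma> i))) \<and>
          (\<forall>i j. i < j \<and> j < k \<longrightarrow>
             set (walk_verts tgt (a j) (ps ! j)) \<inter>
             set (walk_verts tgt (a i) (loop_erase tgt (a i) (ps ! i))) = {})}"

definition family_series ::
  "('e \<Rightarrow> 'v) \<Rightarrow> ('e \<Rightarrow> 'v) \<Rightarrow> nat \<Rightarrow> (nat \<Rightarrow> 'v) \<Rightarrow> (nat \<Rightarrow> 'v) \<Rightarrow> (nat \<Rightarrow> nat) \<Rightarrow> 'e mps" where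
  "family_series src tgt k a b \<sigma> =
     (\<lambda>m. int (card {ps \<in> LE_families src tgt k a b \<sigma>. sum_list (map mset ps) = m}))"

end

theory Submission
  imports Defs
begin


fun pos :: "'a list \<Rightarrow> 'a \<Rightarrow> nat" where
  "pos [] x = 0"
| "pos (y # ys) x = (if y = x then 0 else Suc (pos ys x))"

lemma pos_in: "x \<in> set xs \<Longrightarrow> pos xs x < length xs \<and> xs ! pos xs x = x"
  by (induction xs) auto

lemma pos_nth: "distinct xs \<Longrightarrow> i < length xs \<Longrightarrow> pos xs (xs ! i) = i"
proof (induction xs arbitrary: i)
  case (Cons y ys) then show ?case by (cases i) auto
qed simp

lemma pos_append: "pos (xs @ ys) x = (if x \<in> set xs then pos xs x else length xs + pos ys x)"
  by (induction xs) auto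

definition lstep :: "('e \<Rightarrow> 'v) \<Rightarrow> 'v \<Rightarrow> 'e list \<Rightarrow> 'e \<Rightarrow> 'e list" where
  "lstep tgt a P e = (if tgt e \<in> set (walk_verts tgt a P)
      then take (pos (walk_verts tgt a P) (tgt e)) P else P @ [e])"

lemma wv_take: "walk_verts tgt a (take n P) = take (Suc n) (walk_verts tgt a P)"
  by (simp add: walk_verts_def take_map)

lemma wv_append: "walk_verts tgt a (P @ Q) = walk_verts tgt a P @ map tgt Q"
  by (simp add: walk_verts_def)

lemma wv_length[simp]: "length (walk_verts tgt a P) = Suc (length P)"
  by (simp add: walk_verts_def)

lemma wv_nonempty[simp]: "walk_verts tgt a P \<noteq> []"
  by (simp add: walk_verts_def)

lemma wv_last_take: "n \<le> length P \<Longrightarrow> last (walk_verts tgt a (take n P)) = walk_verts tgt a P ! n"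
  by (simp add: wv_take last_conv_nth min_def)

lemma lstep_distinct:
  "distinct (walk_verts tgt a P) \<Longrightarrow> distinct (walk_verts tgt a (lstep tgt a P e))"
  by (auto simp: lstep_def wv_take wv_append)

lemma foldl_distinct:
  "distinct (walk_verts tgt a P) \<Longrightarrow> distinct (walk_verts tgt a (foldl (lstep tgt a) P es))"
  by (induction es arbitrary: P) (auto simp: lstep_distinct)

lemma lstep_set:
  "set (walk_verts tgt a (lstep tgt a P e)) \<subseteq> set (walk_verts tgt a P) \<union> {tgt e}"
  by (auto simp: lstep_def wv_take wv_append dest: in_set_takeD)

lemma foldl_set:
  "set (walk_verts tgt a (foldl (lstep tgt a) P es)) \<subseteq> set (walk_verts tgt a P) \<union> set (map tgt es)"
proof (induction es arbitrary: P)
  case (Cons e es)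
  show ?case using Cons.IH[of "lstep tgt a P e"] lstep_set[of tgt a P e] by auto
qed simp

lemma lstep_last: "last (walk_verts tgt a (lstep tgt a P e)) = tgt e"
proof (cases "tgt e \<in> set (walk_verts tgt a P)")
  case True
  let ?p = "pos (walk_verts tgt a P) (tgt e)"
  have p: "?p < Suc (length P)" "walk_verts tgt a P ! ?p = tgt e" using pos_in[OF True] by auto
  then have "?p = length P \<or> ?p < length P" by linarith
  then show ?thesis using True p by (auto simp: lstep_def wv_take last_conv_nth min_def)
qed (simp add: lstep_def wv_append)

lemma foldl_last:
  "last (walk_verts tgt a (foldl (lstep tgt a) P es)) = last (walk_verts tgt a (P @ es))"
proof (induction es arbitrary: P)
  case (Cons e es)
  have "last (walk_verts tgt a (foldl (lstep tgt a) (lstep tgt a P e) es))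
      = last (walk_verts tgt a (lstep tgt a P e @ es))" by (rule Cons.IH)
  also have "\<dots> = last (walk_verts tgt a (P @ e # es))"
    using lstep_last[of tgt a P e] by (cases es rule: rev_cases) (auto simp: wv_append)
  finally show ?case by simp
qed simp

lemma foldl_distinct_id:
  "distinct (walk_verts tgt a (P @ es)) \<Longrightarrow> foldl (lstep tgt a) P es = P @ es"
proof (induction es arbitrary: P)
  case (Cons e es)
  have "tgt e \<notin> set (walk_verts tgt a P)" using Cons.prems by (simp add: wv_append)
  then have "lstep tgt a P e = P @ [e]" by (simp add: lstep_def)
  then show ?case using Cons.IH[of "P @ [e]"] Cons.prems by simp
qed simp

definition LEf :: "('e \<Rightarrow> 'v) \<Rightarrow> 'v \<Rightarrow> 'e list \<Rightarrow> 'e list" where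
  "LEf tgt a es = foldl (lstep tgt a) [] es"

lemma distinct_take_le_j:
  assumes "\<not> distinct vs"
  shows "distinct (take (le_j vs) vs)"
proof -
  have "\<not> (p < q \<and> q < le_j vs \<and> vs ! p = vs ! q)" for p q
  proof
    assume h: "p < q \<and> q < le_j vs \<and> vs ! p = vs ! q"
    have "q < length vs" using h le_j_props[OF assms] by auto
    then have "le_j vs \<le> q" unfolding le_j_def using h by (intro Least_le) blast
    then show False using h by simp
  qed
  then show ?thesis
    by (auto simp: distinct_conv_nth) (metis linorder_neqE_nat)
qed

lemma loop_erase_LEf: "loop_erase tgt a es = LEf tgt a es"
proof (induction tgt a es rule: loop_erase.induct)
  case (1 tgt a es)
  show ?case
  proof (cases "distinct (walk_verts tgt a es)")
    case True
    then show ?thesis using foldl_distinct_id[of tgt a "[]" es]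
      by (simp add: loop_erase.simps LEf_def)
  next
    case False
    let ?vs = "walk_verts tgt a es"
    define j where "j = le_j ?vs"
    define i where "i = le_i ?vs"
    have j: "j < Suc (length es)" "i < j" "?vs ! i = ?vs ! j"
      using le_j_props[OF False] le_i_props[OF False] by (auto simp: i_def j_def)
    have dj: "distinct (take j ?vs)" using distinct_take_le_j[OF False] by (simp add: j_def)
    obtain j' where j': "j = Suc j'" using j by (cases j) auto
    have es: "es = take j' es @ [es ! j'] @ drop j es"
      using j j' by (simp add: id_take_nth_drop)
    have d1: "distinct (walk_verts tgt a ([] @ take j' es))" using dj j' by (simp add: wv_take)
    have tg: "tgt (es ! j') = ?vs ! j" using j j' by (simp add: walk_verts_def)
    have inset: "?vs ! j \<in> set (walk_verts tgt a (take j' es))"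
      using j j' by (auto simp: wv_take in_set_conv_nth min_def intro!: exI[of _ i])
    have posi: "pos (walk_verts tgt a (take j' es)) (?vs ! j) = i"
    proof -
      have "walk_verts tgt a (take j' es) ! i = ?vs ! i" using j j' by (simp add: wv_take)
      then show ?thesis using pos_nth[of "walk_verts tgt a (take j' es)" i] dj j j' by (simp add: wv_take min_def)
    qed
    have st: "lstep tgt a (take j' es) (es ! j') = take i es"
      using inset posi tg j j' by (simp add: lstep_def min_def)
    have d2: "distinct (walk_verts tgt a ([] @ take i es))"
    proof -
      have "take (Suc i) ?vs = take (Suc i) (take j ?vs)" using j by (simp add: min_def)
      then have "distinct (take (Suc i) ?vs)" using dj by (metis distinct_take)
      then show ?thesis by (simp add: wv_take)
    qed
    have "LEf tgt a es = foldl (lstep tgt a) (take i es) (drop j es)"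
      unfolding LEf_def
      apply (subst es)
      using foldl_distinct_id[OF d1] st by simp
    also have "\<dots> = LEf tgt a (take i es @ drop j es)"
      unfolding LEf_def using foldl_distinct_id[OF d2] by simp
    finally show ?thesis using 1[OF False] False
      by (subst loop_erase.simps) (simp add: i_def j_def)
  qed
qed



lemma foldl_prefix:
  assumes "set (map tgt \<beta>) \<inter> set (walk_verts tgt a P) = {}"
  shows "\<exists>Q. foldl (lstep tgt a) (P @ Q0) \<beta> = P @ Q"
  using assms
proof (induction \<beta> arbitrary: Q0)
  case Nil then show ?case by auto
next
  case (Cons e \<beta>)
  have ne: "tgt e \<notin> set (walk_verts tgt a P)" using Cons.prems by auto
  have "\<exists>Q1. lstep tgt a (P @ Q0) e = P @ Q1"
  proof (cases "tgt e \<in> set (walk_verts tgt a (P @ Q0))")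
    case True
    then have "tgt e \<in> set (map tgt Q0)" using ne by (simp add: wv_append)
    then have "pos (walk_verts tgt a (P @ Q0)) (tgt e) = Suc (length P) + pos (map tgt Q0) (tgt e)"
      using ne by (simp add: wv_append pos_append)
    then show ?thesis using True by (simp add: lstep_def)
  qed (simp add: lstep_def)
  then obtain Q1 where "lstep tgt a (P @ Q0) e = P @ Q1" by blast
  then show ?case using Cons.IH[of Q1] Cons.prems by simp
qed

lemma LEf_append:
  assumes "set (map tgt \<beta>) \<inter> set (walk_verts tgt a (LEf tgt a \<alpha>)) = {}"
  shows "\<exists>Q. LEf tgt a (\<alpha> @ \<beta>) = LEf tgt a \<alpha> @ Q"
  using foldl_prefix[OF assms, of "[]"] by (simp add: LEf_def)

lemma LEf_distinct: "distinct (walk_verts tgt a (LEf tgt a es))"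
  unfolding LEf_def by (rule foldl_distinct) (simp add: walk_verts_def)

lemma LEf_last: "last (walk_verts tgt a (LEf tgt a es)) = last (walk_verts tgt a es)"
  unfolding LEf_def using foldl_last[of tgt a "[]" es] by simp

lemma LEf_set: "set (walk_verts tgt a (LEf tgt a es)) \<subseteq> set (walk_verts tgt a es)"
  unfolding LEf_def using foldl_set[of tgt a "[]" es] by (auto simp: walk_verts_def)

lemma LEf_snoc: "LEf tgt a (es @ [e]) = lstep tgt a (LEf tgt a es) e"
  by (simp add: LEf_def)

lemma split_exists:
  "v \<in> set (walk_verts tgt a \<pi>) \<Longrightarrow>
   \<exists>n\<le>length \<pi>. walk_verts tgt a \<pi> ! n = v \<and> v \<notin> set (map tgt (drop n \<pi>))"
proof (induction \<pi> rule: rev_induct)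
  case Nil then show ?case by (auto simp: walk_verts_def)
next
  case (snoc e \<pi>)
  show ?case
  proof (cases "tgt e = v")
    case True
    then show ?thesis by (intro exI[of _ "Suc (length \<pi>)"]) (simp add: walk_verts_def nth_append)
  next
    case False
    then have "v \<in> set (walk_verts tgt a \<pi>)" using snoc.prems by (simp add: wv_append)
    then obtain n where "n \<le> length \<pi>" "walk_verts tgt a \<pi> ! n = v" "v \<notin> set (map tgt (drop n \<pi>))"
      using snoc.IH by blast
    then show ?thesis using False
      by (intro exI[of _ n]) (simp add: wv_append nth_append)
  qed
qed

lemma split_unique_aux:
  assumes "n < n'" "n' \<le> length \<pi>" "walk_verts tgt a \<pi> ! n' = v" "v \<notin> set (map tgt (drop n \<pi>))"
  shows False
proof -
  obtain n'' where n'': "n' = Suc n''" using assms by (cases n') auto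
  have "walk_verts tgt a \<pi> ! n' = tgt (\<pi> ! n'')" using assms n'' by (simp add: walk_verts_def)
  moreover have "tgt (\<pi> ! n'') \<in> set (map tgt (drop n \<pi>))"
  proof -
    have "drop n \<pi> ! (n'' - n) = \<pi> ! n''" using assms n'' by simp
    moreover have "n'' - n < length (drop n \<pi>)" using assms n'' by simp
    ultimately show ?thesis by (metis image_eqI list.set_map nth_mem)
  qed
  ultimately show False using assms by simp
qed

lemma split_unique:
  assumes "n \<le> length \<pi>" "walk_verts tgt a \<pi> ! n = v" "v \<notin> set (map tgt (drop n \<pi>))"
    and "n' \<le> length \<pi>" "walk_verts tgt a \<pi> ! n' = v" "v \<notin> set (map tgt (drop n' \<pi>))"
  shows "n = n'"
  using split_unique_aux[of n n' \<pi> tgt a v] split_unique_aux[of n' n \<pi> tgt a v] assms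
  by (metis linorder_neqE_nat)

definition lsplit :: "('e \<Rightarrow> 'v) \<Rightarrow> 'v \<Rightarrow> 'e list \<Rightarrow> 'v \<Rightarrow> nat" where
  "lsplit tgt a \<pi> v = (THE n. n \<le> length \<pi> \<and> walk_verts tgt a \<pi> ! n = v \<and> v \<notin> set (map tgt (drop n \<pi>)))"

lemma lsplit_eq:
  assumes "n \<le> length \<pi>" "walk_verts tgt a \<pi> ! n = v" "v \<notin> set (map tgt (drop n \<pi>))"
  shows "lsplit tgt a \<pi> v = n"
  unfolding lsplit_def
proof (rule the_equality)
  show "n \<le> length \<pi> \<and> walk_verts tgt a \<pi> ! n = v \<and> v \<notin> set (map tgt (drop n \<pi>))"
    using assms by simp
next
  fix n' assume "n' \<le> length \<pi> \<and> walk_verts tgt a \<pi> ! n' = v \<and> v \<notin> set (map tgt (drop n' \<pi>))"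
  then show "n' = n" using split_unique[OF assms] by blast
qed

lemma lsplit:
  assumes "v \<in> set (walk_verts tgt a \<pi>)"
  shows "lsplit tgt a \<pi> v \<le> length \<pi> \<and> walk_verts tgt a \<pi> ! lsplit tgt a \<pi> v = v \<and>
         v \<notin> set (map tgt (drop (lsplit tgt a \<pi> v) \<pi>))"
proof -
  obtain n where n: "n \<le> length \<pi>" "walk_verts tgt a \<pi> ! n = v" "v \<notin> set (map tgt (drop n \<pi>))"
    using split_exists[OF assms] by blast
  then have "lsplit tgt a \<pi> v = n" by (rule lsplit_eq)
  then show ?thesis using n by simp
qed

lemma split_LE_exists:
  "v \<in> set (walk_verts tgt a (LEf tgt a \<pi>)) \<Longrightarrow>
   \<exists>n\<le>length \<pi>. walk_verts tgt a \<pi> ! n = v \<and> v \<notin> set (map tgt (drop n \<pi>)) \<and>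
     set (map tgt (drop n \<pi>)) \<inter> set (walk_verts tgt a (LEf tgt a (take n \<pi>))) = {}"
proof (induction \<pi> rule: rev_induct)
  case Nil then show ?case by (auto simp: walk_verts_def LEf_def)
next
  case (snoc e \<pi>)
  show ?case
  proof (cases "tgt e = v")
    case True
    then show ?thesis by (intro exI[of _ "Suc (length \<pi>)"]) (simp add: walk_verts_def nth_append)
  next
    case False
    have "v \<in> set (walk_verts tgt a (LEf tgt a \<pi>))"
      using snoc.prems lstep_set[of tgt a "LEf tgt a \<pi>" e] False by (auto simp: LEf_snoc)
    then obtain n where n: "n \<le> length \<pi>" "walk_verts tgt a \<pi> ! n = v" "v \<notin> set (map tgt (drop n \<pi>))"
      and dis: "set (map tgt (drop n \<pi>)) \<inter> set (walk_verts tgt a (LEf tgt a (take n \<pi>))) = {}"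
      using snoc.IH by blast
    define P where "P = LEf tgt a (take n \<pi>)"
    obtain Q where PQ: "LEf tgt a \<pi> = P @ Q"
      using LEf_append[OF dis] by (metis P_def append_take_drop_id)
    have lastP: "last (walk_verts tgt a P) = v"
      using LEf_last[of tgt a "take n \<pi>"] n by (simp add: P_def wv_last_take)
    have dP: "distinct (walk_verts tgt a P)" using LEf_distinct P_def by metis
    have "tgt e \<notin> set (walk_verts tgt a P)"
    proof
      assume ine: "tgt e \<in> set (walk_verts tgt a P)"
      define p where "p = pos (walk_verts tgt a P) (tgt e)"
      have p: "p < Suc (length P)" "walk_verts tgt a P ! p = tgt e" using pos_in[OF ine] by (auto simp: p_def)
      have "walk_verts tgt a P ! length P = v" using lastP by (simp add: last_conv_nth)
      then have pl: "p < length P" using p False by (metis less_SucE)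
      have "pos (walk_verts tgt a (P @ Q)) (tgt e) = p" using ine by (simp add: wv_append pos_append p_def)
      then have "LEf tgt a (\<pi> @ [e]) = take p P"
        using ine pl by (simp add: LEf_snoc PQ lstep_def wv_append)
      then have "v \<in> set (take (Suc p) (walk_verts tgt a P))"
        using snoc.prems by (simp add: wv_take)
      then obtain q where q: "q < Suc p" "walk_verts tgt a P ! q = v"
        using pl by (auto simp: in_set_conv_nth)
      have "q = length P"
        using nth_eq_iff_index_eq[OF dP, of q "length P"] q \<open>walk_verts tgt a P ! length P = v\<close> pl
        by simp
      then show False using q pl by simp
    qed
    then show ?thesis using n False dis
      by (intro exI[of _ n]) (auto simp: wv_append nth_append P_def)
  qed
qed

lemma lsplit_LE:
  assumes "v \<in> set (walk_verts tgt a (LEf tgt a \<pi>))"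
  shows "set (map tgt (drop (lsplit tgt a \<pi> v) \<pi>)) \<inter>
           set (walk_verts tgt a (LEf tgt a (take (lsplit tgt a \<pi> v) \<pi>))) = {}"
proof -
  obtain n where n: "n \<le> length \<pi>" "walk_verts tgt a \<pi> ! n = v" "v \<notin> set (map tgt (drop n \<pi>))"
    and d: "set (map tgt (drop n \<pi>)) \<inter> set (walk_verts tgt a (LEf tgt a (take n \<pi>))) = {}"
    using split_LE_exists[OF assms] by blast
  from n have "lsplit tgt a \<pi> v = n" by (rule lsplit_eq)
  then show ?thesis using d by simp
qed



lemma is_walk_append:
  "is_walk src tgt x (xs @ ys) y \<longleftrightarrow>
     is_walk src tgt x xs (last (walk_verts tgt x xs)) \<and> is_walk src tgt (last (walk_verts tgt x xs)) ys y"
  by (induction xs arbitrary: x) (auto simp: walk_verts_def)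

lemma is_walk_last: "is_walk src tgt x xs y \<Longrightarrow> last (walk_verts tgt x xs) = y"
  by (induction xs arbitrary: x) (auto simp: walk_verts_def)

lemma is_walk_take_drop:
  assumes "is_walk src tgt x \<pi> y" "n \<le> length \<pi>"
  shows "is_walk src tgt x (take n \<pi>) (walk_verts tgt x \<pi> ! n)"
    "is_walk src tgt (walk_verts tgt x \<pi> ! n) (drop n \<pi>) y"
proof -
  have "is_walk src tgt x (take n \<pi> @ drop n \<pi>) y" using assms by simp
  moreover have l: "last (walk_verts tgt x (take n \<pi>)) = walk_verts tgt x \<pi> ! n"
    by (rule wv_last_take[OF assms(2)])
  ultimately show "is_walk src tgt x (take n \<pi>) (walk_verts tgt x \<pi> ! n)"
    "is_walk src tgt (walk_verts tgt x \<pi> ! n) (drop n \<pi>) y"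
    unfolding is_walk_append l by auto
qed

lemma is_walk_join:
  "is_walk src tgt x xs v \<Longrightarrow> is_walk src tgt v ys y \<Longrightarrow> is_walk src tgt x (xs @ ys) y"
proof -
  assume h: "is_walk src tgt x xs v" "is_walk src tgt v ys y"
  have "last (walk_verts tgt x xs) = v" using h(1) by (rule is_walk_last)
  then show ?thesis using h by (simp add: is_walk_append)
qed

lemma set_tgt_drop: "set (map tgt (drop m \<pi>)) \<subseteq> set (walk_verts tgt x \<pi>)"
  by (auto simp: walk_verts_def dest: in_set_dropD)

lemma set_wv_take_drop:
  "set (walk_verts tgt x (take n \<pi> @ drop m \<pi>')) \<subseteq> set (walk_verts tgt x \<pi>) \<union> set (walk_verts tgt y \<pi>')"
  using set_tgt_drop[of tgt m \<pi>' y] by (auto simp: wv_append wv_take dest: in_set_takeD)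

lemma sum_list_update:
  fixes f :: "'a \<Rightarrow> 'b::comm_monoid_add"
  shows "i < length xs \<Longrightarrow> sum_list (map f (xs[i := x])) + f (xs ! i) = sum_list (map f xs) + f x"
proof (induction xs arbitrary: i)
  case (Cons y ys)
  then show ?case by (cases i) (auto simp: algebra_simps)
qed simp

lemma sum_list_update2:
  fixes f :: "'a \<Rightarrow> 'b::cancel_comm_monoid_add"
  assumes "i < length xs" "j < length xs" "i \<noteq> j" "f x + f y = f (xs ! i) + f (xs ! j)"
  shows "sum_list (map f (xs[i := x, j := y])) = sum_list (map f xs)"
proof -
  have 1: "sum_list (map f (xs[i := x])) + f (xs ! i) = sum_list (map f xs) + f x"
    using sum_list_update[OF assms(1)] .
  have 2: "sum_list (map f (xs[i := x, j := y])) + f (xs ! j) = sum_list (map f (xs[i := x])) + f y"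
    using sum_list_update[of j "xs[i := x]" f y] assms by simp
  have "sum_list (map f (xs[i := x, j := y])) + (f (xs ! i) + f (xs ! j))
      = (sum_list (map f (xs[i := x, j := y])) + f (xs ! j)) + f (xs ! i)" by (simp only: add.assoc add.commute add.left_commute)
  also have "\<dots> = (sum_list (map f (xs[i := x])) + f (xs ! i)) + f y" using 2 by (simp only: add.assoc add.commute add.left_commute)
  also have "\<dots> = sum_list (map f xs) + (f x + f y)" using 1 by (simp only: add.assoc add.commute add.left_commute)
  finally have "sum_list (map f (xs[i := x, j := y])) + (f (xs ! i) + f (xs ! j))
      = sum_list (map f xs) + (f (xs ! i) + f (xs ! j))" using assms(4) by simp
  then show ?thesis by simp
qed



locale net =
  fixes src tgt :: "'e \<Rightarrow> 'v" and k :: nat and a b :: "nat \<Rightarrow> 'v"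
begin

definition VV :: "'e list list \<Rightarrow> nat \<Rightarrow> 'v list" where
  "VV ps j = walk_verts tgt (a j) (ps ! j)"
definition LL :: "'e list list \<Rightarrow> nat \<Rightarrow> 'v list" where
  "LL ps i = walk_verts tgt (a i) (LEf tgt (a i) (ps ! i))"
definition badp :: "'e list list \<Rightarrow> nat \<Rightarrow> nat \<Rightarrow> bool" where
  "badp ps i j \<longleftrightarrow> i < j \<and> j < k \<and> set (VV ps j) \<inter> set (LL ps i) \<noteq> {}"
definition hit :: "'e list list \<Rightarrow> nat \<Rightarrow> 'v \<Rightarrow> bool" where
  "hit ps i u \<longleftrightarrow> (\<exists>j. i < j \<and> j < k \<and> u \<in> set (VV ps j))"
definition i0 :: "'e list list \<Rightarrow> nat" where
  "i0 ps = (LEAST i. \<exists>j. badp ps i j)"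
definition t0 :: "'e list list \<Rightarrow> nat" where
  "t0 ps = (LEAST t. t < length (LL ps (i0 ps)) \<and> hit ps (i0 ps) (LL ps (i0 ps) ! t))"
definition v0 :: "'e list list \<Rightarrow> 'v" where
  "v0 ps = LL ps (i0 ps) ! t0 ps"
definition j0 :: "'e list list \<Rightarrow> nat" where
  "j0 ps = (LEAST j. i0 ps < j \<and> j < k \<and> v0 ps \<in> set (VV ps j))"
definition swp :: "'e list list \<Rightarrow> 'e list list" where
  "swp ps = (let i = i0 ps; j = j0 ps; v = v0 ps;
      n = lsplit tgt (a i) (ps ! i) v; m = lsplit tgt (a j) (ps ! j) v
    in ps[i := take n (ps ! i) @ drop m (ps ! j), j := take m (ps ! j) @ drop n (ps ! i)])"

lemma swp_props:
  assumes len: "length ps = k" and bad: "\<exists>i j. badp ps i j"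
    and W: "\<forall>l<k. is_walk src tgt (a l) (ps ! l) (b (\<sigma> l))"
  shows "i0 ps < j0 ps \<and> j0 ps < k \<and> length (swp ps) = k \<and>
    (\<forall>l<k. is_walk src tgt (a l) (swp ps ! l) (b ((\<sigma> \<circ> Transposition.transpose (i0 ps) (j0 ps)) l))) \<and>
    sum_list (map mset (swp ps)) = sum_list (map mset ps) \<and>
    (\<exists>i j. badp (swp ps) i j) \<and> i0 (swp ps) = i0 ps \<and> j0 (swp ps) = j0 ps \<and> swp (swp ps) = ps"
proof -
  define i where "i = i0 ps"
  have iex: "\<exists>j. badp ps i j" unfolding i_def i0_def using bad by (rule LeastI_ex)
  have imin: "\<not> badp ps i' j'" if "i' < i" for i' j'
    using not_less_Least[of i' "\<lambda>i. \<exists>j. badp ps i j"] that unfolding i_def i0_def by blast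
  define L where "L = LL ps i"
  have hex: "\<exists>t. t < length L \<and> hit ps i (L ! t)"
  proof -
    obtain j u where "badp ps i j" "u \<in> set (VV ps j)" "u \<in> set L"
      using iex unfolding badp_def L_def by blast
    then show ?thesis unfolding badp_def hit_def by (metis in_set_conv_nth)
  qed
  define t where "t = t0 ps"
  have t: "t < length L \<and> hit ps i (L ! t)"
    unfolding t_def t0_def i_def[symmetric] L_def[symmetric] using hex by (rule LeastI_ex)
  have tmin: "\<not> hit ps i (L ! t')" if "t' < t" for t'
  proof
    assume "hit ps i (L ! t')"
    then have "t \<le> t'" using that t unfolding t_def t0_def i_def[symmetric] L_def[symmetric]
      by (intro Least_le) simp
    then show False using that by simp
  qed
  define v where "v = v0 ps"
  have vL: "v = L ! t" unfolding v_def v0_def L_def i_def t_def by simp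
  have jex: "\<exists>j. i < j \<and> j < k \<and> v \<in> set (VV ps j)" using t vL unfolding hit_def by simp
  define j where "j = j0 ps"
  have j: "i < j \<and> j < k \<and> v \<in> set (VV ps j)"
    unfolding j_def j0_def i_def[symmetric] v_def[symmetric] using jex by (rule LeastI_ex)
  have jmin: "v \<notin> set (VV ps j')" if "i < j'" "j' < j" for j'
  proof
    assume "v \<in> set (VV ps j')"
    then have "j \<le> j'" using that j unfolding j_def j0_def i_def[symmetric] v_def[symmetric]
      by (intro Least_le) simp
    then show False using that by simp
  qed
  have ik: "i < k" "j < k" "i < j" using j by auto
  define \<pi>i where "\<pi>i = ps ! i"
  define \<pi>j where "\<pi>j = ps ! j"
  have vLi: "v \<in> set (walk_verts tgt (a i) (LEf tgt (a i) \<pi>i))"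
    using t vL unfolding L_def LL_def \<pi>i_def by simp
  have vVi: "v \<in> set (walk_verts tgt (a i) \<pi>i)" using vLi LEf_set by fast
  have vVj: "v \<in> set (walk_verts tgt (a j) \<pi>j)" using j unfolding VV_def \<pi>j_def by simp
  define n where "n = lsplit tgt (a i) \<pi>i v"
  define m where "m = lsplit tgt (a j) \<pi>j v"
  have n: "n \<le> length \<pi>i" "walk_verts tgt (a i) \<pi>i ! n = v" "v \<notin> set (map tgt (drop n \<pi>i))"
    using lsplit[OF vVi] unfolding n_def by auto
  have m: "m \<le> length \<pi>j" "walk_verts tgt (a j) \<pi>j ! m = v" "v \<notin> set (map tgt (drop m \<pi>j))"
    using lsplit[OF vVj] unfolding m_def by auto
  define P where "P = LEf tgt (a i) (take n \<pi>i)"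
  have dni: "set (map tgt (drop n \<pi>i)) \<inter> set (walk_verts tgt (a i) P) = {}"
    using lsplit_LE[OF vLi] unfolding P_def n_def by simp
  obtain Q1 where "LEf tgt (a i) (take n \<pi>i @ drop n \<pi>i) = P @ Q1"
    using LEf_append[OF dni[unfolded P_def]] unfolding P_def by blast
  then have Q1: "LEf tgt (a i) \<pi>i = P @ Q1" by simp
  have LQ1: "L = walk_verts tgt (a i) P @ map tgt Q1"
    unfolding L_def LL_def \<pi>i_def[symmetric] Q1 by (simp add: wv_append)
  have lastP: "last (walk_verts tgt (a i) P) = v"
    using LEf_last[of tgt "a i" "take n \<pi>i"] n by (simp add: P_def wv_last_take)
  have vP: "walk_verts tgt (a i) P ! length P = v" using lastP by (simp add: last_conv_nth)
  have dL: "distinct L" unfolding L_def LL_def by (rule LEf_distinct)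
  have LP: "L ! length P = v" using vP LQ1 by (simp add: nth_append)
  have tL: "t < length L" using t by blast
  have PL: "length P < length L" using LQ1 by simp
  have eqv: "L ! t = L ! length P" using vL LP by simp
  have tP: "t = length P"
    using nth_eq_iff_index_eq[OF dL tL PL] eqv by blast
  have LPt: "L ! q = walk_verts tgt (a i) P ! q" if "q \<le> length P" for q
    using that LQ1 by (simp add: nth_append)
  have sub_tgt_i: "set (map tgt (drop n \<pi>i)) \<subseteq> set (VV ps i)"
    unfolding VV_def \<pi>i_def[symmetric] by (rule set_tgt_drop)
  have sub_tgt_j: "set (map tgt (drop m \<pi>j)) \<subseteq> set (VV ps j)"
    unfolding VV_def \<pi>j_def[symmetric] by (rule set_tgt_drop)
  have dmj: "set (map tgt (drop m \<pi>j)) \<inter> set (walk_verts tgt (a i) P) = {}"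
  proof (rule ccontr)
    assume "set (map tgt (drop m \<pi>j)) \<inter> set (walk_verts tgt (a i) P) \<noteq> {}"
    then obtain u where u: "u \<in> set (map tgt (drop m \<pi>j))" "u \<in> set (walk_verts tgt (a i) P)"
      by blast
    obtain q where q0: "q < length (walk_verts tgt (a i) P)" "walk_verts tgt (a i) P ! q = u"
      using u(2) by (metis in_set_conv_nth)
    have q: "q \<le> length P" "walk_verts tgt (a i) P ! q \<in> set (map tgt (drop m \<pi>j))"
      using q0 u by simp_all
    show False
    proof (cases "q = length P")
      case True
      then have "v \<in> set (map tgt (drop m \<pi>j))" using q(2) vP by simp
      then show False using m(3) by blast
    next
      case False
      then have qt: "q < t" using q(1) tP by linarith
      have "L ! q \<in> set (map tgt (drop m \<pi>j))" using q(2) LPt[OF q(1)] by simp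
      then have "L ! q \<in> set (VV ps j)" using sub_tgt_j by blast
      then have "hit ps i (L ! q)" unfolding hit_def using ik by blast
      then show False using tmin[OF qt] by blast
    qed
  qed
  define x where "x = take n \<pi>i @ drop m \<pi>j"
  define y where "y = take m \<pi>j @ drop n \<pi>i"
  have swp_eq: "swp ps = ps[i := x, j := y]"
    unfolding swp_def Let_def x_def y_def n_def m_def \<pi>i_def \<pi>j_def i_def j_def v_def ..
  define ps' where "ps' = swp ps"
  have len': "length ps' = k" using len by (simp add: ps'_def swp_eq)
  have ps'i: "ps' ! i = x" using ik len by (simp add: ps'_def swp_eq)
  have ps'j: "ps' ! j = y" using ik len by (simp add: ps'_def swp_eq)
  have ps'l: "ps' ! l = ps ! l" if "l \<noteq> i" "l \<noteq> j" for l
    using that by (simp add: ps'_def swp_eq)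
  have VVl: "VV ps' l = VV ps l" if "l \<noteq> i" "l \<noteq> j" for l
    using ps'l[OF that] by (simp add: VV_def)
  have LLl: "LL ps' l = LL ps l" if "l \<noteq> i" "l \<noteq> j" for l
    using ps'l[OF that] by (simp add: LL_def)
  have VVi: "set (VV ps' i) \<subseteq> set (VV ps i) \<union> set (VV ps j)"
    unfolding VV_def ps'i x_def \<pi>i_def \<pi>j_def by (rule set_wv_take_drop)
  have VVj: "set (VV ps' j) \<subseteq> set (VV ps j) \<union> set (map tgt (drop n \<pi>i))"
    unfolding VV_def ps'j y_def \<pi>j_def[symmetric]
    using set_wv_take_drop[of tgt "a j" m \<pi>j n \<pi>i "a j"]
    by (auto simp: wv_append wv_take dest: in_set_takeD)
  have VVj2: "set (VV ps' j) \<subseteq> set (VV ps j) \<union> set (VV ps i)" using VVj sub_tgt_i by blast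
  obtain Q2 where Q2: "LEf tgt (a i) x = P @ Q2"
    using LEf_append[OF dmj[unfolded P_def]] unfolding x_def P_def by blast
  define L' where "L' = LL ps' i"
  have L'Q2: "L' = walk_verts tgt (a i) P @ map tgt Q2"
    unfolding L'_def LL_def ps'i Q2 by (simp add: wv_append)
  have vVVj': "v \<in> set (VV ps' j)"
  proof -
    have "last (walk_verts tgt (a j) (take m \<pi>j)) = v" using m by (simp add: wv_last_take)
    then have "v \<in> set (walk_verts tgt (a j) (take m \<pi>j))" by (metis last_in_set wv_nonempty)
    then show ?thesis unfolding VV_def ps'j y_def by (simp add: wv_append)
  qed
  have vL': "v \<in> set L'" using lastP L'Q2 by (metis Un_iff last_in_set set_append wv_nonempty)
  have bad': "badp ps' i j" unfolding badp_def L'_def[symmetric] using vVVj' vL' ik by blast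
  have i0': "i0 ps' = i"
    unfolding i0_def
  proof (rule Least_equality)
    show "\<exists>j. badp ps' i j" using bad' by blast
  next
    fix i' assume "\<exists>j'. badp ps' i' j'"
    then obtain j' where b': "badp ps' i' j'" by blast
    show "i \<le> i'"
    proof (rule ccontr)
      assume "\<not> i \<le> i'"
      then have ii: "i' < i" by simp
      then have LLi': "LL ps' i' = LL ps i'" using ik by (intro LLl) auto
      obtain u where u1: "u \<in> set (VV ps' j')" and u2: "u \<in> set (LL ps i')" and ij': "i' < j'" "j' < k"
        using b' LLi' unfolding badp_def by auto
      have "\<exists>j''. badp ps i' j''"
      proof (cases "j' = i \<or> j' = j")
        case True
        then have "set (VV ps' j') \<subseteq> set (VV ps i) \<union> set (VV ps j)" using VVi VVj2 by blast
        then have "u \<in> set (VV ps i) \<or> u \<in> set (VV ps j)" using u1 by blast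
        then show ?thesis
        proof
          assume "u \<in> set (VV ps i)"
          then have "badp ps i' i" unfolding badp_def using u2 ii ik by blast
          then show ?thesis by blast
        next
          assume "u \<in> set (VV ps j)"
          moreover have "i' < j" using ii ik by linarith
          ultimately have "badp ps i' j" unfolding badp_def using u2 ik by blast
          then show ?thesis by blast
        qed
      next
        case False
        then have "VV ps' j' = VV ps j'" by (intro VVl) auto
        then have "badp ps i' j'" unfolding badp_def using u1 u2 ij' by auto
        then show ?thesis by blast
      qed
      then show False using imin[OF ii] by blast
    qed
  qed
  have L'Pt: "L' ! q = walk_verts tgt (a i) P ! q" if "q \<le> length P" for q
    using that L'Q2 by (simp add: nth_append)
  have t0': "t0 ps' = t"
    unfolding t0_def i0' L'_def[symmetric]
  proof (rule Least_equality)
    show "t < length L' \<and> hit ps' i (L' ! t)"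
      using L'Pt[of t] tP vP vVVj' ik L'Q2 unfolding hit_def by auto
  next
    fix t' assume h: "t' < length L' \<and> hit ps' i (L' ! t')"
    show "t \<le> t'"
    proof (rule ccontr)
      assume "\<not> t \<le> t'"
      then have tt: "t' < t" by simp
      then have eq: "L' ! t' = L ! t'" using L'Pt LPt tP by simp
      obtain j' where j': "i < j'" "j' < k" "L ! t' \<in> set (VV ps' j')"
        using h eq unfolding hit_def by auto
      show False
      proof (cases "j' = j")
        case True
        then have "L ! t' \<in> set (VV ps j) \<or> L ! t' \<in> set (map tgt (drop n \<pi>i))" using VVj j' by blast
        then show False
        proof
          assume "L ! t' \<in> set (VV ps j)"
          then have "hit ps i (L ! t')" unfolding hit_def using ik by blast
          then show False using tmin tt by blast
        next
          assume "L ! t' \<in> set (map tgt (drop n \<pi>i))"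
          moreover have "L ! t' \<in> set (walk_verts tgt (a i) P)"
            using LPt[of t'] tt tP by (simp add: nth_mem)
          ultimately show False using dni by blast
        qed
      next
        case False
        then have "hit ps i (L ! t')" unfolding hit_def using j' VVl[of j'] by auto
        then show False using tmin tt by blast
      qed
    qed
  qed
  have v0': "v0 ps' = v" unfolding v0_def i0' t0' L'_def[symmetric]
    using L'Pt[of t] tP vP by simp
  have j0': "j0 ps' = j"
    unfolding j0_def i0' v0'
  proof (rule Least_equality)
    show "i < j \<and> j < k \<and> v \<in> set (VV ps' j)" using ik vVVj' by simp
  next
    fix j' assume h: "i < j' \<and> j' < k \<and> v \<in> set (VV ps' j')"
    show "j \<le> j'"
    proof (rule ccontr)
      assume "\<not> j \<le> j'"
      then show False using h jmin[of j'] VVl[of j'] by auto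
    qed
  qed
  have lnx: "lsplit tgt (a i) x v = n"
  proof (rule lsplit_eq)
    show "n \<le> length x" using n by (simp add: x_def)
    show "walk_verts tgt (a i) x ! n = v"
      using n by (simp add: x_def wv_append nth_append wv_take)
    show "v \<notin> set (map tgt (drop n x))" using n m by (simp add: x_def)
  qed
  have lmy: "lsplit tgt (a j) y v = m"
  proof (rule lsplit_eq)
    show "m \<le> length y" using m by (simp add: y_def)
    show "walk_verts tgt (a j) y ! m = v"
      using m by (simp add: y_def wv_append nth_append wv_take)
    show "v \<notin> set (map tgt (drop m y))" using n m by (simp add: y_def)
  qed
  have swp2: "swp ps' = ps"
  proof -
    have "swp ps' = ps'[i := take n x @ drop m y, j := take m y @ drop n x]"
      unfolding swp_def Let_def i0' j0' v0' ps'i ps'j lnx lmy ..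
    also have "take n x @ drop m y = \<pi>i" using n m by (simp add: x_def y_def)
    also have "take m y @ drop n x = \<pi>j" using n m by (simp add: x_def y_def)
    also have "ps'[i := \<pi>i, j := \<pi>j] = ps"
      unfolding ps'_def swp_eq \<pi>i_def \<pi>j_def using ik
      by (simp add: list_update_swap[of i j] list_update_overwrite)
    finally show ?thesis .
  qed
  have walks: "\<forall>l<k. is_walk src tgt (a l) (ps' ! l) (b ((\<sigma> \<circ> Transposition.transpose i j) l))"
  proof (intro allI impI)
    fix l assume l: "l < k"
    have Wi: "is_walk src tgt (a i) \<pi>i (b (\<sigma> i))" using W ik \<pi>i_def by simp
    have Wj: "is_walk src tgt (a j) \<pi>j (b (\<sigma> j))" using W ik \<pi>j_def by simp
    show "is_walk src tgt (a l) (ps' ! l) (b ((\<sigma> \<circ> Transposition.transpose i j) l))"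
    proof (cases "l = i \<or> l = j")
      case True
      then show ?thesis
      proof
        assume li: "l = i"
        have "is_walk src tgt (a i) x (b (\<sigma> j))" unfolding x_def
          using is_walk_take_drop(1)[OF Wi n(1)] is_walk_take_drop(2)[OF Wj m(1)] n m
          by (metis is_walk_join)
        then show ?thesis using li ps'i by simp
      next
        assume lj: "l = j"
        have "is_walk src tgt (a j) y (b (\<sigma> i))" unfolding y_def
          using is_walk_take_drop(1)[OF Wj m(1)] is_walk_take_drop(2)[OF Wi n(1)] n m
          by (metis is_walk_join)
        then show ?thesis using lj ps'j ik by simp
      qed
    next
      case False
      then show ?thesis using ps'l[of l] W l by (simp add: transpose_def)
    qed
  qed
  have msum: "sum_list (map mset ps') = sum_list (map mset ps)"
    unfolding ps'_def swp_eq
  proof (rule sum_list_update2)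
    show "i < length ps" "j < length ps" "i \<noteq> j" using ik len by auto
    have "mset x + mset y = mset (take n \<pi>i @ drop n \<pi>i) + mset (take m \<pi>j @ drop m \<pi>j)"
      unfolding x_def y_def mset_append by (simp add: ac_simps)
    then show "mset x + mset y = mset (ps ! i) + mset (ps ! j)"
      by (simp add: \<pi>i_def \<pi>j_def)
  qed
  show ?thesis
    using ik len' walks msum bad' i0' j0' swp2
    unfolding ps'_def i_def j_def by blast
qed

end



lemma mset_le_sum_list: "x \<in> set xs \<Longrightarrow> f x \<subseteq># sum_list (map f xs)"
proof (induction xs)
  case (Cons y ys)
  then show ?case by (auto intro: subset_mset.order_trans[OF _ mset_subset_eq_add_right] mset_subset_eq_add_left)
qed simp

lemma finite_sub_lists: "finite {xs. mset xs \<subseteq># m}"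
proof -
  have "{xs. mset xs \<subseteq># m} \<subseteq> {xs. set xs \<subseteq> set_mset m \<and> length xs \<le> size m}"
    by (auto dest: size_mset_mono mset_subset_eqD)
  then show ?thesis using finite_lists_length_le[of "set_mset m" "size m"] finite_subset by auto
qed

lemma finite_submsets: "finite {m1. m1 \<subseteq># (m :: 'a multiset)}"
proof -
  have "{m1. m1 \<subseteq># m} \<subseteq> mset ` {xs. mset xs \<subseteq># m}"
    by (auto intro: image_eqI[OF _ _] simp: image_iff) (metis ex_mset)
  then show ?thesis using finite_sub_lists finite_surj by blast
qed

definition FW :: "('e \<Rightarrow> 'v) \<Rightarrow> ('e \<Rightarrow> 'v) \<Rightarrow> ('v \<times> 'v) list \<Rightarrow> 'e multiset \<Rightarrow> 'e list list set" where
  "FW src tgt cs m = {ps. length ps = length cs \<and>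
     (\<forall>i<length cs. is_walk src tgt (fst (cs ! i)) (ps ! i) (snd (cs ! i))) \<and> sum_list (map mset ps) = m}"

lemma finite_lists_bounded: "finite {ps. length ps = n \<and> sum_list (map mset ps) = (m :: 'e multiset)}"
proof -
  have "{ps. length ps = n \<and> sum_list (map mset ps) = m} \<subseteq> {ps. set ps \<subseteq> {xs. mset xs \<subseteq># m} \<and> length ps = n}"
    using mset_le_sum_list[of _ _ mset] by auto
  then show ?thesis using finite_lists_length_eq[OF finite_sub_lists] finite_subset by blast
qed

lemma finite_FW: "finite (FW src tgt cs m)"
  by (rule finite_subset[OF _ finite_lists_bounded[of "length cs" m]]) (auto simp: FW_def)

lemma finite_walks_mset: "finite {es. is_walk src tgt x es y \<and> mset es = m1}"
  by (rule finite_subset[OF _ finite_sub_lists[of m1]]) auto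

lemma prod_walks:
  "mps_prod_list (map (\<lambda>(x, y). walk_series src tgt x y) cs) m = int (card (FW src tgt cs m))"
proof (induction cs arbitrary: m)
  case Nil
  have "FW src tgt [] m = (if m = {#} then {[]} else {})" by (auto simp: FW_def)
  then show ?case by (simp add: mps_prod_list_def mps_one_def)
next
  case (Cons c cs)
  obtain x y where c: "c = (x, y)" by (cases c)
  define A where "A m1 = {es. is_walk src tgt x es y \<and> mset es = m1}" for m1
  define B where "B m1 = A m1 \<times> FW src tgt cs (m - m1)" for m1
  have "mps_prod_list (map (\<lambda>(x, y). walk_series src tgt x y) (c # cs)) m
      = (\<Sum>m1\<in>{m1. m1 \<subseteq># m}. int (card (A m1)) * int (card (FW src tgt cs (m - m1))))"
    using Cons.IH by (simp add: mps_prod_list_def mps_mult_def c walk_series_def A_def)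
  also have "\<dots> = (\<Sum>m1\<in>{m1. m1 \<subseteq># m}. int (card (B m1)))"
    by (simp add: B_def card_cartesian_product)
  also have "\<dots> = int (\<Sum>m1\<in>{m1. m1 \<subseteq># m}. card (B m1))" by simp
  also have "(\<Sum>m1\<in>{m1. m1 \<subseteq># m}. card (B m1)) = card (\<Union>(B ` {m1. m1 \<subseteq># m}))"
  proof (rule card_UN_disjoint[symmetric])
    show "finite {m1. m1 \<subseteq># m}" by (rule finite_submsets)
    show "\<forall>i\<in>{m1. m1 \<subseteq># m}. finite (B i)"
      using finite_walks_mset finite_FW by (auto simp: B_def A_def intro!: finite_cartesian_product)
    show "\<forall>i\<in>{m1. m1 \<subseteq># m}. \<forall>j\<in>{m1. m1 \<subseteq># m}. i \<noteq> j \<longrightarrow> B i \<inter> B j = {}"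
      by (auto simp: B_def A_def)
  qed
  also have "\<Union>(B ` {m1. m1 \<subseteq># m}) = {(es, ps). es # ps \<in> FW src tgt (c # cs) m}"
  proof (intro set_eqI iffI)
    fix z assume "z \<in> \<Union>(B ` {m1. m1 \<subseteq># m})"
    then obtain es ps m1 where z: "z = (es, ps)" "m1 \<subseteq># m" "es \<in> A m1" "ps \<in> FW src tgt cs (m - m1)"
      by (auto simp: B_def)
    then have "mset es + sum_list (map mset ps) = m"
      by (auto simp: A_def FW_def)
    then show "z \<in> {(es, ps). es # ps \<in> FW src tgt (c # cs) m}"
      using z by (auto simp: FW_def A_def c nth_Cons split: nat.splits)
  next
    fix z assume "z \<in> {(es, ps). es # ps \<in> FW src tgt (c # cs) m}"
    then obtain es ps where z: "z = (es, ps)" "es # ps \<in> FW src tgt (c # cs) m" by auto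
    have w0: "is_walk src tgt x es y" using z(2) by (force simp: FW_def c)
    have ws: "\<forall>i<length cs. is_walk src tgt (fst (cs ! i)) (ps ! i) (snd (cs ! i))"
      using z(2) by (auto simp: FW_def)
    have sm: "mset es + sum_list (map mset ps) = m" "length ps = length cs" using z(2) by (auto simp: FW_def)
    then have "mset es \<subseteq># m" by (metis mset_subset_eq_add_left)
    moreover have "es \<in> A (mset es)" using w0 by (simp add: A_def)
    moreover have "ps \<in> FW src tgt cs (m - mset es)" using ws sm by (auto simp: FW_def)
    ultimately show "z \<in> \<Union>(B ` {m1. m1 \<subseteq># m})" using z(1) by (auto simp: B_def)
  qed
  also have "card {(es, ps). es # ps \<in> FW src tgt (c # cs) m} = card (FW src tgt (c # cs) m)"
  proof -
    have "(\<lambda>(es, ps). es # ps) ` {(es, ps). es # ps \<in> FW src tgt (c # cs) m} = FW src tgt (c # cs) m"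
    proof (intro set_eqI iffI)
      fix qs assume "qs \<in> FW src tgt (c # cs) m"
      moreover then obtain es ps where "qs = es # ps" by (cases qs) (auto simp: FW_def)
      ultimately show "qs \<in> (\<lambda>(es, ps). es # ps) ` {(es, ps). es # ps \<in> FW src tgt (c # cs) m}"
        by (auto intro!: image_eqI[of _ _ "(es, ps)"])
    qed auto
    moreover have "inj_on (\<lambda>(es, ps). es # ps) X" for X :: "('e list \<times> 'e list list) set"
      by (auto simp: inj_on_def)
    ultimately show ?thesis by (metis card_image)
  qed
  finally show ?case .
qed

lemma inv_sum:
  fixes s :: "'a \<Rightarrow> int"
  assumes "finite S" "\<And>x. x \<in> S \<Longrightarrow> f x \<in> S" "\<And>x. x \<in> S \<Longrightarrow> f (f x) = x"
    "\<And>x. x \<in> S \<Longrightarrow> s (f x) = - s x"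
  shows "sum s S = 0"
proof -
  have "sum s S = sum (\<lambda>x. s (f x)) S"
    by (rule sum.reindex_bij_witness[of S f f]) (use assms in auto)
  also have "\<dots> = sum (\<lambda>x. - s x) S" using assms(4) by (rule sum.cong[OF refl])
  also have "\<dots> = - sum s S" by (simp add: sum_negf)
  finally show ?thesis by simp
qed



context net
begin

lemma main:
  "mps_det k (\<lambda>i j. walk_series src tgt (a i) (b j)) =
   (\<lambda>m. \<Sum>\<sigma>\<in>{\<sigma>. \<sigma> permutes {..<k}}. of_int (sign \<sigma>) * family_series src tgt k a b \<sigma> m)"
proof (rule ext)
  fix m :: "'e multiset"
  define Perms where "Perms = {\<sigma>. \<sigma> permutes {..<k}}"
  define F where "F \<sigma> = {ps. length ps = k \<and> (\<forall>i<k. is_walk src tgt (a i) (ps ! i) (b (\<sigma> i))) \<and>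
      sum_list (map mset ps) = m}" for \<sigma> :: "nat \<Rightarrow> nat"
  define G where "G \<sigma> = {ps \<in> F \<sigma>. \<not> (\<exists>i j. badp ps i j)}" for \<sigma>
  define Bd where "Bd \<sigma> = {ps \<in> F \<sigma>. \<exists>i j. badp ps i j}" for \<sigma>
  have finF: "finite (F \<sigma>)" for \<sigma>
    by (rule finite_subset[OF _ finite_lists_bounded[of k m]]) (auto simp: F_def)
  have prodF: "mps_prod_list (map (\<lambda>i. walk_series src tgt (a i) (b (\<sigma> i))) [0..<k]) m = int (card (F \<sigma>))" for \<sigma>
  proof -
    have e1: "map (\<lambda>i. walk_series src tgt (a i) (b (\<sigma> i))) [0..<k]
        = map (\<lambda>(x, y). walk_series src tgt x y) (map (\<lambda>i. (a i, b (\<sigma> i))) [0..<k])" by simp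
    have e2: "FW src tgt (map (\<lambda>i. (a i, b (\<sigma> i))) [0..<k]) m = F \<sigma>"
      by (auto simp: FW_def F_def)
    have "mps_prod_list (map (\<lambda>(x, y). walk_series src tgt x y) (map (\<lambda>i. (a i, b (\<sigma> i))) [0..<k])) m
       = int (card (FW src tgt (map (\<lambda>i. (a i, b (\<sigma> i))) [0..<k]) m))" by (rule prod_walks)
    then show ?thesis by (simp only: e1 e2)
  qed
  have famG: "family_series src tgt k a b \<sigma> m = int (card (G \<sigma>))" for \<sigma>
  proof -
    have "{ps \<in> LE_families src tgt k a b \<sigma>. sum_list (map mset ps) = m} = G \<sigma>"
      by (auto simp: LE_families_def G_def F_def badp_def VV_def LL_def loop_erase_LEf)
    then show ?thesis by (simp add: family_series_def)
  qed
  have cardF: "card (F \<sigma>) = card (G \<sigma>) + card (Bd \<sigma>)" for \<sigma>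
  proof -
    have "F \<sigma> = G \<sigma> \<union> Bd \<sigma>" "G \<sigma> \<inter> Bd \<sigma> = {}" by (auto simp: G_def Bd_def)
    moreover have "finite (G \<sigma>)" "finite (Bd \<sigma>)" using finF by (auto simp: G_def Bd_def)
    ultimately show ?thesis by (simp add: card_Un_disjoint)
  qed
  have finP: "finite Perms" unfolding Perms_def by (rule finite_permutations) simp
  define S where "S = Sigma Perms Bd"
  define f where "f = (\<lambda>(\<sigma> :: nat \<Rightarrow> nat, ps). (\<sigma> \<circ> Transposition.transpose (i0 ps) (j0 ps), swp ps))"
  have zero: "(\<Sum>x\<in>S. sign (fst x)) = (0::int)"
  proof (rule inv_sum[where f = f and s = "\<lambda>x. sign (fst x)"])
    show "finite S" unfolding S_def using finP finF
      by (intro finite_SigmaI) (auto simp: Bd_def)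
  next
    fix x assume "x \<in> S"
    then obtain \<sigma> ps where x: "x = (\<sigma>, ps)" "\<sigma> permutes {..<k}" "ps \<in> Bd \<sigma>"
      by (auto simp: S_def Perms_def)
    have len: "length ps = k" and bad: "\<exists>i j. badp ps i j"
      and W: "\<forall>l<k. is_walk src tgt (a l) (ps ! l) (b (\<sigma> l))" and sm: "sum_list (map mset ps) = m"
      using x(3) by (auto simp: Bd_def F_def)
    note sp = swp_props[OF len bad W]
    have pT: "Transposition.transpose (i0 ps) (j0 ps) permutes {..<k}"
      using sp by (intro permutes_swap_id) auto
    have perm: "\<sigma> \<circ> Transposition.transpose (i0 ps) (j0 ps) permutes {..<k}"
      by (rule permutes_compose[OF pT x(2)])
    show "f x \<in> S"
      using sp perm sm unfolding S_def x(1) f_def Perms_def Bd_def F_def by auto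
    show "f (f x) = x"
      using sp unfolding x(1) f_def by (simp add: comp_assoc)
    have "permutation \<sigma>" using x(2) permutation_permutes by blast
    then have "sign (\<sigma> \<circ> Transposition.transpose (i0 ps) (j0 ps)) = sign \<sigma> * sign (Transposition.transpose (i0 ps) (j0 ps))"
      by (rule sign_compose[OF _ permutation_swap_id])
    also have "\<dots> = - sign \<sigma>" using sp by (simp add: sign_swap_id)
    finally show "sign (fst (f x)) = - sign (fst x)" unfolding x(1) f_def by simp
  qed
  have "(\<Sum>\<sigma>\<in>Perms. sign \<sigma> * int (card (Bd \<sigma>))) = (\<Sum>\<sigma>\<in>Perms. \<Sum>ps\<in>Bd \<sigma>. sign \<sigma>)"
    by (simp add: mult.commute)
  also have "\<dots> = (\<Sum>x\<in>S. sign (fst x))"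
    unfolding S_def using finP finF
    by (subst sum.Sigma) (auto simp: Bd_def case_prod_beta)
  finally have z: "(\<Sum>\<sigma>\<in>Perms. sign \<sigma> * int (card (Bd \<sigma>))) = 0" using zero by simp
  have "mps_det k (\<lambda>i j. walk_series src tgt (a i) (b j)) m
      = (\<Sum>\<sigma>\<in>Perms. sign \<sigma> * int (card (G \<sigma>)) + sign \<sigma> * int (card (Bd \<sigma>)))"
    unfolding mps_det_def Perms_def[symmetric] using prodF cardF by (simp add: algebra_simps)
  also have "\<dots> = (\<Sum>\<sigma>\<in>Perms. sign \<sigma> * int (card (G \<sigma>)))"
    using z by (simp add: sum.distrib)
  also have "\<dots> = (\<Sum>\<sigma>\<in>Perms. of_int (sign \<sigma>) * family_series src tgt k a b \<sigma> m)"
    using famG by simp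
  finally show "mps_det k (\<lambda>i j. walk_series src tgt (a i) (b j)) m =
     (\<Sum>\<sigma>\<in>{\<sigma>. \<sigma> permutes {..<k}}. of_int (sign \<sigma>) * family_series src tgt k a b \<sigma> m)"
    unfolding Perms_def .
qed

end

theorem theorem6p1:
  fixes src tgt :: "'e \<Rightarrow> 'v" and k :: nat and a b :: "nat \<Rightarrow> 'v"
  assumes "inj_on a {..<k}" and "inj_on b {..<k}"
  shows "mps_det k (\<lambda>i j. walk_series src tgt (a i) (b j)) =
         (\<lambda>m. \<Sum>\<sigma>\<in>{\<sigma>. \<sigma> permutes {..<k}}. of_int (sign \<sigma>) * family_series src tgt k a b \<sigma> m)"
  by (rule net.main)


end
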